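(* Let $(P_X,P_{Y|X})$ be an input/channel pair and let $(P_\Theta,P_{\Phi|\Theta})$ be the corresponding normalized input/channel pair. Then: (i) $\Phi\sim\mathcal U$; (ii) $I(\Theta;\Phi)=I(X;Y)$; (iii) the joint distribution $P_{\Theta\Phi}$ is proper (absolutely continuous w.r.t. Lebesgue measure on $(0,1)^2$); (iv) the conditional c.d.f. $F_{\Theta|\Phi}(\theta|\phi)$ is continuous in $\theta$ for $P_\Phi$-almost all $\phi\in(0,1)$.
   Context: All real r.v.'s are mixtures of absolutely continuous and discrete parts; $F_X$ is a c.d.f., $F_X^{-1}(t)=\inf\{x:F_X(x)>t\}$, $P_Y(\{y\})=\Pr(Y=y)$, $\mathcal U$ is the uniform distribution on $(0,1)$. An input/channel pair $(P_X,P_{Y|X})$ consists of a memoryless channel $P_{Y|X}$ and a distribution $P_X$ supported in its input alphabet with $I(X;Y)<\infty$; $P_Y$ is the induced output distribution. Normalized channel: let $\Theta\sim\mathcal U$; given $\Theta=\theta$ let $Y\sim P_{Y|X}(\cdot|F_X^{-1}(\theta))$; let $\Lambda\sim\mathcal U$ be independent of $(\Theta,Y)$; set $\Phi=F_Y(Y)-P_Y(\{Y\})\Lambda$. $P_{\Phi|\Theta}$ is the normalized channel and $P_\Theta=\mathcal U$ the normalized input. *)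

theory Defs
  imports "HOL-Probability.Probability"
begin

definition quantile :: "(real \<Rightarrow> real) \<Rightarrow> real \<Rightarrow> real" where
  "quantile F t = Inf {x. F x > t}"

definition unif01 :: "real measure" where
  "unif01 = uniform_measure lborel {0<..<1}"

text \<open>Relative entropy D(P||Q) in nats, valued in the extended reals:
  +infinity unless P is absolutely continuous w.r.t. Q; otherwise
  the integral of f ln f with f = dP/dQ (its negative part is always finite).\<close>
definition KL_div :: "'a measure \<Rightarrow> 'a measure \<Rightarrow> ereal" where
  "KL_div P Q = (if absolutely_continuous Q P then
     (let f = (\<lambda>x. enn2real (RN_deriv Q P x)) in
       enn2ereal (\<integral>\<^sup>+ x. ennreal (f x * ln (f x)) \<partial>Q)
       - enn2ereal (\<integral>\<^sup>+ x. ennreal (- (f x * ln (f x))) \<partial>Q))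
   else \<infinity>)"

definition mutual_info :: "(real \<times> real) measure \<Rightarrow> ereal" where
  "mutual_info J = KL_div J (distr J borel fst \<Otimes>\<^sub>M distr J borel snd)"

definition joint_dist :: "real measure \<Rightarrow> (real \<Rightarrow> real measure) \<Rightarrow> (real \<times> real) measure" where
  "joint_dist PX K = PX \<bind> (\<lambda>x. K x \<bind> (\<lambda>y. return (borel \<Otimes>\<^sub>M borel) (x, y)))"

definition output_dist :: "real measure \<Rightarrow> (real \<Rightarrow> real measure) \<Rightarrow> real measure" where
  "output_dist PX K = PX \<bind> K"

text \<open>Joint distribution of (Theta, Phi) of the normalized input/channel pair:
  Theta ~ U, Y | Theta=th ~ K (F_X^{-1} th), Lambda ~ U independent,
  Phi = F_Y(Y) - P_Y({Y}) Lambda.\<close>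
definition norm_joint :: "real measure \<Rightarrow> (real \<Rightarrow> real measure) \<Rightarrow> (real \<times> real) measure" where
  "norm_joint PX K =
     unif01 \<bind> (\<lambda>th. K (quantile (cdf PX) th) \<bind> (\<lambda>y. unif01 \<bind> (\<lambda>l.
       return (borel \<Otimes>\<^sub>M borel)
         (th, cdf (output_dist PX K) y - measure (output_dist PX K) {y} * l))))"

end

theory Submission
  imports Defs
begin

lemma sets_unif01[simp, measurable_cong]: "sets unif01 = sets borel"
  by (simp add: unif01_def)
lemma space_unif01[simp]: "space unif01 = UNIV"
  by (simp add: unif01_def)
lemma prob_space_unif01: "prob_space unif01"
  unfolding unif01_def by (rule prob_space_uniform_measure) auto
lemma unif01_in_prob_algebra: "unif01 \<in> space (prob_algebra borel)"
  by (simp add: space_prob_algebra prob_space_unif01)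
lemma measurable_unif01[measurable]: "(\<lambda>x. unif01) \<in> M \<rightarrow>\<^sub>M prob_algebra borel"
  using unif01_in_prob_algebra by simp
lemma emeasure_unif01: "A \<in> sets borel \<Longrightarrow> emeasure unif01 A = emeasure lborel (A \<inter> {0<..<1})"
  unfolding unif01_def by (subst emeasure_uniform_measure) (auto simp: Int_commute divide_ennreal_def)
lemma nn_integral_unif01: "f \<in> borel_measurable borel \<Longrightarrow>
   (\<integral>\<^sup>+x. f x \<partial>unif01) = (\<integral>\<^sup>+x. f x * indicator {0<..<1} x \<partial>lborel)"
  unfolding unif01_def by (subst nn_integral_uniform_measure) (auto simp: divide_ennreal_def)
lemma AE_unif01: "AE x in unif01. 0 < x \<and> x < 1"
  unfolding unif01_def by (rule AE_uniform_measureI) auto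

interpretation U: prob_space unif01 by (rule prob_space_unif01)

context
  fixes P :: "real measure"
  assumes P: "real_distribution P"
begin

interpretation P: cdf_distribution P
  using P by (simp add: cdf_distribution_def)

lemma q_exists_gt: "u < 1 \<Longrightarrow> \<exists>x. cdf P x > u"
  using order_tendstoD(1)[OF P.cdf_lim_at_top_prob, of u]
  by (metis eventually_happens' trivial_limit_at_top_linorder)

lemma q_bdd: assumes "0 < u" "u < 1" shows "bdd_below {x. cdf P x > u}"
proof (rule bdd_belowI[of _ "P.I u"])
  fix x assume "x \<in> {x. cdf P x > u}"
  hence "u \<le> cdf P x" by simp
  thus "P.I u \<le> x" using P.pseudoinverse[of u x] assms by simp
qed

lemma q_le1: "0 < u \<Longrightarrow> u < 1 \<Longrightarrow> u < cdf P b \<Longrightarrow> quantile (cdf P) u \<le> b"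
  unfolding quantile_def by (rule cInf_lower) (auto intro: q_bdd)

lemma q_le2: assumes u: "0 < u" "u < 1" and q: "quantile (cdf P) u \<le> b"
  shows "u \<le> cdf P b"
proof (rule ccontr)
  assume "\<not> u \<le> cdf P b"
  hence lt: "cdf P b < u" by simp
  define u' where "u' = (cdf P b + u) / 2"
  have u': "0 < u'" "u' < 1" "cdf P b < u'" "u' < u"
    using lt u P.cdf_nonneg[of b] by (auto simp: u'_def)
  have "P.I u' \<le> quantile (cdf P) u"
    unfolding quantile_def
  proof (rule cInf_greatest)
    show "{x. u < cdf P x} \<noteq> {}" using q_exists_gt[OF u(2)] by auto
    fix x assume "x \<in> {x. u < cdf P x}"
    hence "u' \<le> cdf P x" using u' by auto
    thus "P.I u' \<le> x" using P.pseudoinverse[of u' x] u' by auto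
  qed
  moreover have "\<not> P.I u' \<le> b" using P.pseudoinverse[of u' b] u' by auto
  ultimately show False using q by auto
qed

lemma q_mono:
  assumes uv: "0 < u" "u \<le> v" "v < 1"
  shows "quantile (cdf P) u \<le> quantile (cdf P) v"
  unfolding quantile_def
proof (rule cInf_superset_mono)
  obtain x where "v < cdf P x" using q_exists_gt[OF uv(3)] by blast
  thus "{x. v < cdf P x} \<noteq> {}" by blast
  have "u < 1" using uv by linarith
  show "bdd_below {x. u < cdf P x}" by (rule q_bdd[OF uv(1) \<open>u < 1\<close>])
  show "{x. v < cdf P x} \<subseteq> {x. u < cdf P x}" using uv(2) by auto
qed

lemma measurable_quantile[measurable]: "quantile (cdf P) \<in> borel_measurable borel"
proof -
  define C :: "real set set" where "C = {{..<0},{0},{0<..<1},{1..}}"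
  have 1: "countable C" unfolding C_def by simp
  have 2: "\<And>c. c \<in> C \<Longrightarrow> c \<in> sets borel" unfolding C_def by auto
  have A: "{x. cdf P x > u} = UNIV" if "u < 0" for u by (auto intro: less_le_trans[OF that P.cdf_nonneg])
  have B: "{x. cdf P x > u} = {}" if "1 \<le> u" for u by (auto simp: not_less intro: order_trans[OF P.cdf_bounded_prob that])
  have m1: "mono_on {..<0} (quantile (cdf P))"
    by (rule mono_onI) (simp add: quantile_def A)
  have m2: "mono_on {1..} (quantile (cdf P))"
    by (rule mono_onI) (simp add: quantile_def B)
  have m3: "mono_on {0<..<1} (quantile (cdf P))"
  proof (rule mono_onI)
    fix r s :: real assume "r \<in> {0<..<1}" "s \<in> {0<..<1}" "r \<le> s"
    thus "quantile (cdf P) r \<le> quantile (cdf P) s" by (intro q_mono) auto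
  qed
  have m4: "mono_on {0} (quantile (cdf P))"
    by (rule mono_onI) simp
  have 3: "\<And>c. c \<in> C \<Longrightarrow> mono_on c (quantile (cdf P))"
    unfolding C_def by (elim insertE emptyE) (simp_all only: m1 m2 m3 m4)
  have 4: "\<Union>C = UNIV"
  proof -
    have "x < 0 \<or> x = 0 \<or> (0 < x \<and> x < 1) \<or> 1 \<le> x" for x :: real by linarith
    thus ?thesis unfolding C_def by auto
  qed
  show ?thesis by (rule borel_measurable_piecewise_mono[OF 1 2 3 4])
qed

lemma measurable_cdf[measurable]: "cdf P \<in> borel_measurable borel"
  by (rule P.measurable_C)

lemma measurable_atom[measurable]: "(\<lambda>y. measure P {y}) \<in> borel_measurable borel"
proof -
  have "(\<lambda>y. measure P {..<y}) \<in> borel_measurable borel"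
    by (intro borel_measurable_mono monoI P.finite_measure_mono) auto
  moreover have "measure P {y} = cdf P y - measure P {..<y}" for y
  proof -
    have "{..y} - {..<y} = {y}" by auto
    moreover have "measure P ({..y} - {..<y}) = measure P {..y} - measure P {..<y}"
      by (rule P.finite_measure_Diff) auto
    ultimately show ?thesis by (simp add: cdf_def)
  qed
  ultimately show ?thesis by simp
qed

end

definition rp :: "real measure \<Rightarrow> real \<Rightarrow> real \<Rightarrow> real" where
  "rp P y l = cdf P y - measure P {y} * l"

context
  fixes P :: "real measure"
  assumes P: "real_distribution P"
begin

interpretation P: cdf_distribution P
  using P by (simp add: cdf_distribution_def)

lemma measurable_rp[measurable (raw)]:
  "f \<in> M \<rightarrow>\<^sub>M borel \<Longrightarrow> g \<in> M \<rightarrow>\<^sub>M borel \<Longrightarrow> (\<lambda>x. rp P (f x) (g x)) \<in> M \<rightarrow>\<^sub>M borel"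
proof -
  assume f: "f \<in> M \<rightarrow>\<^sub>M borel" and g: "g \<in> M \<rightarrow>\<^sub>M borel"
  have 1: "(\<lambda>x. cdf P (f x)) \<in> M \<rightarrow>\<^sub>M borel" by (rule measurable_compose[OF f measurable_cdf[OF P]])
  have 2: "(\<lambda>x. measure P {f x}) \<in> M \<rightarrow>\<^sub>M borel" by (rule measurable_compose[OF f measurable_atom[OF P]])
  show ?thesis unfolding rp_def by (intro borel_measurable_diff borel_measurable_times 1 2 g)
qed

lemma cdf_split: "cdf P y = measure P {..<y} + measure P {y}"
proof -
  have "{..y} = {..<y} \<union> {y}" by auto
  moreover have "measure P ({..<y} \<union> {y}) = measure P {..<y} + measure P {y}"
    by (rule P.finite_measure_Union) auto
  ultimately show ?thesis by (simp add: cdf_def)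
qed

lemma atom_nonneg: "0 \<le> measure P {y}" by simp

lemma rp_le: "0 \<le> l \<Longrightarrow> rp P y l \<le> cdf P y"
  unfolding rp_def using atom_nonneg[of y] by (simp add: mult_nonneg_nonneg)

lemma rp_ge: "l \<le> 1 \<Longrightarrow> measure P {..<y} \<le> rp P y l"
proof -
  assume "l \<le> 1"
  hence "measure P {y} * l \<le> measure P {y}"
    using atom_nonneg[of y] by (simp add: mult_left_le)
  thus ?thesis unfolding rp_def using cdf_split[of y] by simp
qed

lemma sets_rp_le[measurable]: "{l. rp P y l \<le> a} \<in> sets borel"
  by measurable

lemma W_case1: assumes "cdf P y \<le> a" shows "emeasure unif01 {l. rp P y l \<le> a} = 1"
proof -
  have "{l. rp P y l \<le> a} \<inter> {0<..<1} = {0<..<1}"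
    using assms by (auto intro!: order_trans[OF rp_le[of _ y]])
  thus ?thesis by (simp add: emeasure_unif01)
qed

lemma W_case0: assumes "a < measure P {..<y}" shows "emeasure unif01 {l. rp P y l \<le> a} = 0"
proof -
  have "{l. rp P y l \<le> a} \<inter> {0<..<1} = {}"
  proof safe
    fix l assume "rp P y l \<le> a" "l \<in> {0<..<1}"
    thus "l \<in> {}" using rp_ge[of l y] assms by simp
  qed
  thus ?thesis by (simp add: emeasure_unif01)
qed

lemma W_mid: assumes "measure P {..<y} \<le> a" "a \<le> cdf P y"
  shows "emeasure unif01 {l. rp P y l \<le> a} * ennreal (measure P {y}) = ennreal (a - measure P {..<y})"
proof (cases "measure P {y} = 0")
  case True
  then show ?thesis using assms cdf_split[of y] by simp
next
  case False
  hence at: "0 < measure P {y}" using atom_nonneg[of y] by linarith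
  define c where "c = (cdf P y - a) / measure P {y}"
  have c: "0 \<le> c" "c \<le> 1" using assms at cdf_split[of y] by (auto simp: c_def field_simps)
  have "emeasure unif01 {l. rp P y l \<le> a} = emeasure lborel ({l. rp P y l \<le> a} \<inter> {0<..<1})"
    by (simp add: emeasure_unif01)
  also have "\<dots> = emeasure lborel {c..<1}"
  proof (rule emeasure_eq_AE)
    show "AE x in lborel. (x \<in> {l. rp P y l \<le> a} \<inter> {0<..<1}) = (x \<in> {c..<1})"
      using AE_lborel_singleton[of "0::real"]
    proof (rule AE_mp, intro AE_I2 impI)
      fix x :: real assume "x \<noteq> 0"
      have "rp P y x \<le> a \<longleftrightarrow> c \<le> x"
        unfolding rp_def c_def using at by (simp add: field_simps)
      thus "(x \<in> {l. rp P y l \<le> a} \<inter> {0<..<1}) = (x \<in> {c..<1})"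
        using c \<open>x \<noteq> 0\<close> by auto
    qed
  qed auto
  also have "\<dots> = ennreal (1 - c)" using c by simp
  finally have "emeasure unif01 {l. rp P y l \<le> a} * ennreal (measure P {y}) = ennreal ((1 - c) * measure P {y})"
    using c at by (simp add: ennreal_mult)
  also have "(1 - c) * measure P {y} = a - measure P {..<y}"
    using at cdf_split[of y] by (simp add: c_def field_simps)
  finally show ?thesis .
qed

end

context
  fixes P :: "real measure"
  assumes P: "real_distribution P"
begin

interpretation P: cdf_distribution P
  using P by (simp add: cdf_distribution_def)

lemma left_le: assumes "\<And>x. x < s \<Longrightarrow> cdf P x \<le> a" shows "measure P {..<s} \<le> a"
proof (rule tendsto_upperbound[OF P.cdf_at_left])
  show "\<forall>\<^sub>F x in at_left s. cdf P x \<le> a"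
    unfolding eventually_at_left_field by (intro exI[of _ "s - 1"]) (auto intro: assms)
qed simp

lemma int_case3:
  assumes a: "0 < a" "a < cdf P b"
  shows "(\<integral>\<^sup>+ y. indicator {..b} y * emeasure unif01 {l. rp P y l \<le> a} \<partial>P) = ennreal a"
proof -
  have a1: "a < 1" using a P.cdf_bounded_prob[of b] by linarith
  define s where "s = quantile (cdf P) a"
  have sb: "s \<le> b" unfolding s_def using q_le1[OF P a(1) a1 a(2)] .
  have lt: "cdf P x \<le> a" if "x < s" for x
  proof (rule ccontr)
    assume "\<not> cdf P x \<le> a"
    hence "s \<le> x" unfolding s_def using q_le1[OF P a(1) a1, of x] by simp
    thus False using that by simp
  qed
  have gt: "a < measure P {..<x}" if sx: "s < x" for x
  proof -
    have ne: "{x. a < cdf P x} \<noteq> {}" using a(2) by blast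
    obtain e where e: "a < cdf P e" "e < x"
      using cInf_lessD[OF ne, of x] sx[unfolded s_def quantile_def] by auto
    have "cdf P e \<le> measure P {..<x}" unfolding cdf_def
      by (rule P.finite_measure_mono) (use e in auto)
    thus ?thesis using e by simp
  qed
  have Fs: "a \<le> cdf P s" using q_le2[OF P a(1) a1, of s] unfolding s_def by simp
  have Ls: "measure P {..<s} \<le> a" by (rule left_le) (rule lt)
  define w where "w = emeasure unif01 {l. rp P s l \<le> a}"
  have pt: "indicator {..b} y * emeasure unif01 {l. rp P y l \<le> a}
       = indicator {..<s} y + w * indicator {s} y" for y :: real
  proof (cases "y < s")
    case True
    then show ?thesis using W_case1[OF P lt[OF True]] sb by (simp add: indicator_def)
  next
    case False
    show ?thesis
    proof (cases "y = s")
      case True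
      then show ?thesis using sb by (simp add: indicator_def w_def)
    next
      case False
      hence "s < y" using \<open>\<not> y < s\<close> by simp
      then show ?thesis using W_case0[OF P gt[OF \<open>s < y\<close>]] \<open>\<not> y < s\<close> False
        by (simp add: indicator_def)
    qed
  qed
  have "(\<integral>\<^sup>+ y. indicator {..b} y * emeasure unif01 {l. rp P y l \<le> a} \<partial>P)
      = (\<integral>\<^sup>+ y. indicator {..<s} y + w * indicator {s} y \<partial>P)"
    by (simp only: pt)
  also have "\<dots> = emeasure P {..<s} + w * emeasure P {s}"
    by (subst nn_integral_add) (auto simp: nn_integral_cmult_indicator)
  also have "\<dots> = ennreal (measure P {..<s}) + w * ennreal (measure P {s})"
    by (simp add: P.emeasure_eq_measure)
  also have "w * ennreal (measure P {s}) = ennreal (a - measure P {..<s})"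
    unfolding w_def by (rule W_mid[OF P Ls Fs])
  also have "ennreal (measure P {..<s}) + ennreal (a - measure P {..<s}) = ennreal a"
    using Ls by (subst ennreal_plus[symmetric]) auto
  finally show ?thesis .
qed

end

definition K1 :: "real measure \<Rightarrow> real \<Rightarrow> (real \<times> real) measure" where
  "K1 P y = distr unif01 (borel \<Otimes>\<^sub>M borel) (\<lambda>l. (rp P y l, y))"

context
  fixes P :: "real measure"
  assumes P: "real_distribution P"
begin

interpretation P: cdf_distribution P
  using P by (simp add: cdf_distribution_def)

lemma K1_meas: "K1 P \<in> borel \<rightarrow>\<^sub>M prob_algebra (borel \<Otimes>\<^sub>M borel)"
proof -
  have "(\<lambda>(y, l). (rp P y l, y)) \<in> borel \<Otimes>\<^sub>M borel \<rightarrow>\<^sub>M borel \<Otimes>\<^sub>M borel"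
    using measurable_rp[OF P] by measurable
  hence "(\<lambda>y. distr unif01 (borel \<Otimes>\<^sub>M borel) (\<lambda>l. (rp P y l, y))) \<in> borel \<rightarrow>\<^sub>M prob_algebra (borel \<Otimes>\<^sub>M borel)"
    by (intro measurable_distr_prob_space2[OF measurable_unif01]) simp
  thus ?thesis unfolding K1_def[abs_def] .
qed

lemma K1_rect: "emeasure (K1 P y) ({..a} \<times> {..b}) = indicator {..b} y * emeasure unif01 {l. rp P y l \<le> a}"
proof -
  have m: "(\<lambda>l. (rp P y l, y)) \<in> unif01 \<rightarrow>\<^sub>M borel \<Otimes>\<^sub>M borel"
    using measurable_rp[OF P] by measurable
  have "emeasure (K1 P y) ({..a} \<times> {..b}) = emeasure unif01 ((\<lambda>l. (rp P y l, y)) -` ({..a} \<times> {..b}) \<inter> space unif01)"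
    unfolding K1_def by (rule emeasure_distr[OF m]) auto
  also have "(\<lambda>l. (rp P y l, y)) -` ({..a} \<times> {..b}) \<inter> space unif01 = (if y \<le> b then {l. rp P y l \<le> a} else {})"
    by auto
  finally show ?thesis by (simp add: indicator_def)
qed

lemma R_val: "(\<integral>\<^sup>+ y. indicator {..b} y * emeasure unif01 {l. rp P y l \<le> a} \<partial>P) = ennreal (max 0 (min a (cdf P b)))"
proof -
  consider (i) "cdf P b \<le> a" | (ii) "0 < a" "a < cdf P b" | (iii) "a \<le> 0" "a < cdf P b" by linarith
  then show ?thesis
  proof cases
    case i
    have "indicator {..b} y * emeasure unif01 {l. rp P y l \<le> a} = indicator {..b} y" for y
    proof (cases "y \<le> b")
      case True
      hence "cdf P y \<le> a" using i P.cdf_nondecreasing[OF True] by linarith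
      thus ?thesis using W_case1[OF P] True by simp
    qed simp
    hence "(\<integral>\<^sup>+ y. indicator {..b} y * emeasure unif01 {l. rp P y l \<le> a} \<partial>P) = emeasure P {..b}"
      by simp
    also have "\<dots> = ennreal (cdf P b)" by (simp add: cdf_def P.emeasure_eq_measure)
    finally show ?thesis using i P.cdf_nonneg[of b] by (simp add: min_def max_def)
  next
    case ii
    thus ?thesis using int_case3[OF P ii] by (simp add: min_def max_def)
  next
    case iii
    let ?I = "\<lambda>a. (\<integral>\<^sup>+ y. indicator {..b} y * emeasure unif01 {l. rp P y l \<le> a} \<partial>P)"
    have "?I a \<le> 0"
    proof (rule ennreal_le_epsilon)
      fix e :: real assume e: "0 < e"
      show "?I a \<le> 0 + ennreal e"
      proof (cases "cdf P b \<le> 0")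
        case True
        have "?I a \<le> (\<integral>\<^sup>+ y. indicator {..b} y \<partial>P)"
          by (intro nn_integral_mono) (auto simp: indicator_def P.emeasure_le_1 intro!: U.emeasure_le_1)
        also have "\<dots> = ennreal (cdf P b)" by (simp add: cdf_def P.emeasure_eq_measure)
        also have "\<dots> = 0" using True by (simp add: ennreal_eq_0_iff)
        finally show ?thesis by simp
      next
        case False
        define e' where "e' = min e (cdf P b / 2)"
        have e': "0 < e'" "e' < cdf P b" "e' \<le> e" "a \<le> e'" using False e iii by (auto simp: e'_def)
        have "?I a \<le> ?I e'"
        proof (intro nn_integral_mono mult_left_mono emeasure_mono)
          show "{l. rp P y l \<le> a} \<subseteq> {l. rp P y l \<le> e'}" for y using e' by auto
        qed (auto intro: sets_rp_le[OF P])
        also have "\<dots> = ennreal e'" by (rule int_case3[OF P e'(1,2)])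
        also have "\<dots> \<le> ennreal e" using e' by simp
        finally show ?thesis by simp
      qed
    qed
    thus ?thesis using iii by (simp add: max_def min_def)
  qed
qed

lemma q_le_iff: "0 < u \<Longrightarrow> u < 1 \<Longrightarrow> u \<noteq> cdf P b \<Longrightarrow> quantile (cdf P) u \<le> b \<longleftrightarrow> u < cdf P b"
  using q_le1[OF P, of u b] q_le2[OF P, of u b] by auto

lemma M2_rect: "emeasure (distr unif01 (borel \<Otimes>\<^sub>M borel) (\<lambda>u. (u, quantile (cdf P) u))) ({..a} \<times> {..b})
   = ennreal (max 0 (min a (cdf P b)))"
proof -
  have m: "(\<lambda>u. (u, quantile (cdf P) u)) \<in> unif01 \<rightarrow>\<^sub>M borel \<Otimes>\<^sub>M borel"
    using measurable_quantile[OF P] by measurable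
  have ms: "{u. u \<le> a \<and> quantile (cdf P) u \<le> b} \<in> sets borel"
    using measurable_quantile[OF P] by measurable
  let ?c = "cdf P b"
  have c: "0 \<le> ?c" "?c \<le> 1" using P.cdf_nonneg P.cdf_bounded_prob by auto
  have "emeasure (distr unif01 (borel \<Otimes>\<^sub>M borel) (\<lambda>u. (u, quantile (cdf P) u))) ({..a} \<times> {..b})
      = emeasure unif01 ((\<lambda>u. (u, quantile (cdf P) u)) -` ({..a} \<times> {..b}) \<inter> space unif01)"
    by (rule emeasure_distr[OF m]) auto
  also have "(\<lambda>u. (u, quantile (cdf P) u)) -` ({..a} \<times> {..b}) \<inter> space unif01 = {u. u \<le> a \<and> quantile (cdf P) u \<le> b}"
    by auto
  also have "emeasure unif01 {u. u \<le> a \<and> quantile (cdf P) u \<le> b}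
     = emeasure lborel ({u. u \<le> a \<and> quantile (cdf P) u \<le> b} \<inter> {0<..<1})"
    using ms by (simp add: emeasure_unif01)
  also have "\<dots> = emeasure lborel ({0<..<1} \<inter> {..a} \<inter> {..<?c})"
  proof (rule emeasure_eq_AE)
    show "AE x in lborel. (x \<in> {u. u \<le> a \<and> quantile (cdf P) u \<le> b} \<inter> {0<..<1}) = (x \<in> {0<..<1} \<inter> {..a} \<inter> {..<?c})"
      using AE_lborel_singleton[of ?c]
    proof (rule AE_mp, intro AE_I2 impI)
      fix x :: real assume "x \<noteq> ?c"
      thus "(x \<in> {u. u \<le> a \<and> quantile (cdf P) u \<le> b} \<inter> {0<..<1}) = (x \<in> {0<..<1} \<inter> {..a} \<inter> {..<?c})"
        using q_le_iff[of x b] by auto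
    qed
  qed (use ms in auto)
  also have "\<dots> = ennreal (max 0 (min a ?c))"
  proof (cases "a < ?c")
    case True
    show ?thesis
    proof (cases "0 \<le> a")
      case True
      have "{0<..<1} \<inter> {..a} \<inter> {..<?c} = {0<..a}" using \<open>a < ?c\<close> c by auto
      thus ?thesis using True \<open>a < ?c\<close> by (simp add: max_def min_def)
    next
      case False
      have "{0<..<1} \<inter> {..a} \<inter> {..<?c} = {}" using False by auto
      thus ?thesis using False \<open>a < ?c\<close> by (simp add: max_def min_def)
    qed
  next
    case False
    have "{0<..<1} \<inter> {..a} \<inter> {..<?c} = {0<..<?c}" using False c by auto
    thus ?thesis using False c by (simp add: max_def min_def)
  qed
  finally show ?thesis .
qed

end

lemma sets_borel_atMost: "sets (borel :: real measure) = sigma_sets UNIV (range atMost)"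
proof -
  have "sets (borel :: real measure) = sets (sigma UNIV (range (\<lambda>a::real. {..a})))"
    by (subst borel_eq_atMost) simp
  also have "\<dots> = sigma_sets UNIV (range atMost)" by (rule sets_measure_of) auto
  finally show ?thesis .
qed

lemma UN_atMost_nat: "(\<Union>n::nat. {..real n}) = UNIV"
proof -
  have "x \<in> (\<Union>n::nat. {..real n})" for x :: real
    using real_arch_simple[of x] by auto
  thus ?thesis by auto
qed

lemma sets_pair_borel_rect:
  "sets (borel \<Otimes>\<^sub>M borel :: (real \<times> real) measure) =
     sigma_sets UNIV {a \<times> b | a b. a \<in> range atMost \<and> b \<in> range atMost}"
proof -
  have C: "countable (range (\<lambda>n::nat. {..real n}))" "range (\<lambda>n::nat. {..real n}) \<subseteq> range atMost"
     "\<Union>(range (\<lambda>n::nat. {..real n})) = space (borel :: real measure)"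
    using UN_atMost_nat by auto
  have "sets (borel \<Otimes>\<^sub>M borel :: (real \<times> real) measure) =
     sets (sigma (space borel \<times> space borel) {a \<times> b | a b. a \<in> range atMost \<and> b \<in> range atMost})"
    by (rule sets_pair_eq[OF _ _ C _ _ C]) (auto simp: sets_borel_atMost)
  also have "\<dots> = sigma_sets UNIV {a \<times> b | a b. a \<in> range atMost \<and> b \<in> range atMost}"
    by (subst sets_measure_of) auto
  finally show ?thesis .
qed

context
  fixes P :: "real measure"
  assumes P: "real_distribution P"
begin

interpretation P: real_distribution P by (rule P)

lemma M1_rect: "emeasure (P \<bind> K1 P) ({..a} \<times> {..b}) = ennreal (max 0 (min a (cdf P b)))"
proof -
  have "emeasure (P \<bind> K1 P) ({..a} \<times> {..b}) = (\<integral>\<^sup>+ y. emeasure (K1 P y) ({..a} \<times> {..b}) \<partial>P)"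
    by (rule emeasure_bind) (auto intro: measurable_prob_algebraD[OF K1_meas[OF P]] cong: measurable_cong_sets)
  also have "\<dots> = ennreal (max 0 (min a (cdf P b)))"
    by (simp add: K1_rect[OF P] R_val[OF P])
  finally show ?thesis .
qed

lemma RPIT: "P \<bind> K1 P = distr unif01 (borel \<Otimes>\<^sub>M borel) (\<lambda>u. (u, quantile (cdf P) u))"
proof (rule sym, rule measure_eqI_generator_eq[where \<Omega>=UNIV and
      E="{a \<times> b | a b. a \<in> range (atMost :: real \<Rightarrow> real set) \<and> b \<in> range (atMost :: real \<Rightarrow> real set)}" and A="\<lambda>i. {..real i} \<times> {..real i}"])
  show "Int_stable {a \<times> b | a b. a \<in> range (atMost :: real \<Rightarrow> real set) \<and> b \<in> range (atMost :: real \<Rightarrow> real set)}"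
  proof (rule Int_stableI)
    fix X Y assume "X \<in> {a \<times> b | a b. a \<in> range (atMost :: real \<Rightarrow> real set) \<and> b \<in> range (atMost :: real \<Rightarrow> real set)}"
       "Y \<in> {a \<times> b | a b. a \<in> range (atMost :: real \<Rightarrow> real set) \<and> b \<in> range (atMost :: real \<Rightarrow> real set)}"
    then obtain x1 y1 x2 y2 where "X = {..x1} \<times> {..y1}" "Y = {..x2} \<times> {..y2}" by blast
    hence "X \<inter> Y = {..min x1 x2} \<times> {..min y1 y2}" by auto
    thus "X \<inter> Y \<in> {a \<times> b | a b. a \<in> range (atMost :: real \<Rightarrow> real set) \<and> b \<in> range (atMost :: real \<Rightarrow> real set)}" by blast
  qed
  show "{a \<times> b | a b. a \<in> range (atMost :: real \<Rightarrow> real set) \<and> b \<in> range (atMost :: real \<Rightarrow> real set)} \<subseteq> Pow UNIV" by simp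
  fix X assume "X \<in> {a \<times> b | a b. a \<in> range (atMost :: real \<Rightarrow> real set) \<and> b \<in> range (atMost :: real \<Rightarrow> real set)}"
  then obtain a b where X: "X = {..a} \<times> {..b}" by blast
  show "emeasure (distr unif01 (borel \<Otimes>\<^sub>M borel) (\<lambda>u. (u, quantile (cdf P) u))) X = emeasure (P \<bind> K1 P) X"
    unfolding X M1_rect M2_rect[OF P] ..
next
  show "sets (distr unif01 (borel \<Otimes>\<^sub>M borel) (\<lambda>u. (u, quantile (cdf P) u))) =
    sigma_sets UNIV {a \<times> b | a b. a \<in> range (atMost :: real \<Rightarrow> real set) \<and> b \<in> range (atMost :: real \<Rightarrow> real set)}"
    by (simp add: sets_pair_borel_rect)
  have "sets (P \<bind> K1 P) = sets (borel \<Otimes>\<^sub>M borel)"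
    by (rule sets_bind) (auto simp: K1_def)
  thus "sets (P \<bind> K1 P) = sigma_sets UNIV {a \<times> b | a b. a \<in> range (atMost :: real \<Rightarrow> real set) \<and> b \<in> range (atMost :: real \<Rightarrow> real set)}"
    by (simp add: sets_pair_borel_rect)
  show "range (\<lambda>i. {..real i} \<times> {..real i}) \<subseteq> {a \<times> b | a b. a \<in> range (atMost :: real \<Rightarrow> real set) \<and> b \<in> range (atMost :: real \<Rightarrow> real set)}"
    by blast
  show "(\<Union>i. {..real i} \<times> {..real i}) = (UNIV :: (real \<times> real) set)"
  proof -
    have "(x, y) \<in> (\<Union>i. {..real i} \<times> {..real i})" for x y :: real
      using real_arch_simple[of "max x y"] by auto
    thus ?thesis by auto
  qed
  show "emeasure (distr unif01 (borel \<Otimes>\<^sub>M borel) (\<lambda>u. (u, quantile (cdf P) u))) ({..real i} \<times> {..real i}) \<noteq> \<infinity>" for i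
    unfolding M2_rect[OF P] by simp
qed

lemma L2: assumes v[measurable]: "case_prod v \<in> borel_measurable (borel \<Otimes>\<^sub>M borel)"
  shows "(\<integral>\<^sup>+ u. v u (quantile (cdf P) u) \<partial>unif01) = (\<integral>\<^sup>+ y. \<integral>\<^sup>+ l. v (rp P y l) y \<partial>unif01 \<partial>P)"
proof -
  have m: "(\<lambda>u. (u, quantile (cdf P) u)) \<in> unif01 \<rightarrow>\<^sub>M borel \<Otimes>\<^sub>M borel"
    using measurable_quantile[OF P] by measurable
  have m2: "(\<lambda>l. (rp P y l, y)) \<in> unif01 \<rightarrow>\<^sub>M borel \<Otimes>\<^sub>M borel" for y
    using measurable_rp[OF P] by measurable
  have "(\<integral>\<^sup>+ u. v u (quantile (cdf P) u) \<partial>unif01) = (\<integral>\<^sup>+ z. case_prod v z \<partial>distr unif01 (borel \<Otimes>\<^sub>M borel) (\<lambda>u. (u, quantile (cdf P) u)))"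
    by (subst nn_integral_distr[OF m]) auto
  also have "\<dots> = (\<integral>\<^sup>+ z. case_prod v z \<partial>(P \<bind> K1 P))" by (simp add: RPIT)
  also have "\<dots> = (\<integral>\<^sup>+ y. \<integral>\<^sup>+ z. case_prod v z \<partial>K1 P y \<partial>P)"
    by (rule nn_integral_bind[OF v]) (auto intro: measurable_prob_algebraD[OF K1_meas[OF P]] cong: measurable_cong_sets)
  also have "\<dots> = (\<integral>\<^sup>+ y. \<integral>\<^sup>+ l. v (rp P y l) y \<partial>unif01 \<partial>P)"
    unfolding K1_def by (intro nn_integral_cong, subst nn_integral_distr[OF m2]) auto
  finally show ?thesis .
qed

lemma quantile_transform: assumes [measurable]: "w \<in> borel_measurable borel"
  shows "(\<integral>\<^sup>+ u. w (quantile (cdf P) u) \<partial>unif01) = (\<integral>\<^sup>+ y. w y \<partial>P)"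
proof -
  have "emeasure unif01 UNIV = 1" using U.emeasure_space_1 by simp
  thus ?thesis using L2[of "\<lambda>u y. w y"] by (simp add: measurable_snd'')
qed

end

locale chan =
  fixes PX :: "real measure" and K :: "real \<Rightarrow> real measure"
  assumes PX: "prob_space PX" "sets PX = sets borel"
    and K: "K \<in> borel \<rightarrow>\<^sub>M prob_algebra borel"
begin

abbreviation "PY \<equiv> output_dist PX K"
abbreviation "J \<equiv> joint_dist PX K"
abbreviation "NJ \<equiv> norm_joint PX K"

lemma PXd: "real_distribution PX"
  unfolding real_distribution_def using PX by (simp add: real_distribution_axioms_def)

interpretation X: real_distribution PX by (rule PXd)

lemma K_meas[measurable]: "K \<in> borel \<rightarrow>\<^sub>M prob_algebra borel" by (rule K)
lemma K_sub[measurable]: "K \<in> borel \<rightarrow>\<^sub>M subprob_algebra borel" by (rule measurable_prob_algebraD[OF K])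
lemma K_subX: "K \<in> PX \<rightarrow>\<^sub>M subprob_algebra borel"
  using K_sub by (simp cong: measurable_cong_sets add: PX(2))
lemma K_prob: "prob_space (K x)"
  using measurable_space[OF K, of x] by (simp add: space_prob_algebra)
lemma sets_K[measurable_cong]: "sets (K x) = sets borel"
  using measurable_space[OF K, of x] by (simp add: space_prob_algebra)
lemma space_K[simp]: "space (K x) = UNIV"
  using sets_eq_imp_space_eq[OF sets_K[of x]] by simp

lemma sets_PY[measurable_cong]: "sets PY = sets borel"
  unfolding output_dist_def by (rule sets_bind[OF sets_K]) (simp add: PX(2) sets_eq_imp_space_eq[OF PX(2)])
lemma space_PY[simp]: "space PY = UNIV"
  using sets_eq_imp_space_eq[OF sets_PY] by simp
lemma PY_prob: "prob_space PY"
  unfolding output_dist_def by (rule X.prob_space_bind[OF _ K_subX]) (simp add: K_prob)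
lemma PYd: "real_distribution PY"
  unfolding real_distribution_def using PY_prob sets_PY by (simp add: real_distribution_axioms_def)

interpretation Y: real_distribution PY by (rule PYd)

lemma nn_integral_PY: assumes [measurable]: "h \<in> borel_measurable borel"
  shows "(\<integral>\<^sup>+ y. h y \<partial>PY) = (\<integral>\<^sup>+ x. \<integral>\<^sup>+ y. h y \<partial>K x \<partial>PX)"
  unfolding output_dist_def by (rule nn_integral_bind[OF _ K_subX]) simp

lemma J_kernel[measurable]: "(\<lambda>x. K x \<bind> (\<lambda>y. return (borel \<Otimes>\<^sub>M borel) (x, y))) \<in> borel \<rightarrow>\<^sub>M subprob_algebra (borel \<Otimes>\<^sub>M borel)"
proof -
  have "(\<lambda>x. K x \<bind> (\<lambda>y. return (borel \<Otimes>\<^sub>M borel) (x, y))) \<in> borel \<rightarrow>\<^sub>M prob_algebra (borel \<Otimes>\<^sub>M borel)"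
    by measurable
  thus ?thesis by (rule measurable_prob_algebraD)
qed

lemma sets_J[measurable_cong]: "sets J = sets (borel \<Otimes>\<^sub>M borel)"
  unfolding joint_dist_def
  by (rule sets_bind[where N="borel \<Otimes>\<^sub>M borel"])
     (auto simp: sets_kernel[OF J_kernel] PX(2) sets_eq_imp_space_eq[OF PX(2)])

lemma nn_integral_J: assumes [measurable]: "H \<in> borel_measurable (borel \<Otimes>\<^sub>M borel)"
  shows "(\<integral>\<^sup>+ z. H z \<partial>J) = (\<integral>\<^sup>+ x. \<integral>\<^sup>+ y. H (x, y) \<partial>K x \<partial>PX)"
proof -
  have "(\<integral>\<^sup>+ z. H z \<partial>J) = (\<integral>\<^sup>+ x. \<integral>\<^sup>+ z. H z \<partial>(K x \<bind> (\<lambda>y. return (borel \<Otimes>\<^sub>M borel) (x, y))) \<partial>PX)"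
    unfolding joint_dist_def
    by (rule nn_integral_bind[OF assms]) (simp add: PX(2) cong: measurable_cong_sets)
  also have "\<dots> = (\<integral>\<^sup>+ x. \<integral>\<^sup>+ y. H (x, y) \<partial>K x \<partial>PX)"
  proof (intro nn_integral_cong)
    fix x
    have r: "(\<lambda>y. return (borel \<Otimes>\<^sub>M borel) (x, y)) \<in> K x \<rightarrow>\<^sub>M subprob_algebra (borel \<Otimes>\<^sub>M borel)"
      by measurable
    show "(\<integral>\<^sup>+ z. H z \<partial>(K x \<bind> (\<lambda>y. return (borel \<Otimes>\<^sub>M borel) (x, y)))) = (\<integral>\<^sup>+ y. H (x, y) \<partial>K x)"
      by (subst nn_integral_bind[OF assms r], intro nn_integral_cong, subst nn_integral_return)
         (auto simp: space_pair_measure)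
  qed
  finally show ?thesis .
qed

lemma emeasure_J: "A \<in> sets (borel \<Otimes>\<^sub>M borel) \<Longrightarrow> emeasure J A = (\<integral>\<^sup>+ x. \<integral>\<^sup>+ y. indicator A (x, y) \<partial>K x \<partial>PX)"
  using nn_integral_J[of "indicator A"] by (simp add: sets_J)

lemma distr_J_fst: "distr J borel fst = PX"
proof (rule measure_eqI)
  show "sets (distr J borel fst) = sets PX" by (simp add: PX(2))
  fix A assume A: "A \<in> sets (distr J borel fst)"
  hence A': "A \<in> sets borel" by simp
  have "emeasure (distr J borel fst) A = emeasure J (fst -` A \<inter> space J)"
    by (rule emeasure_distr) (auto simp: A' cong: measurable_cong_sets[OF sets_J refl])
  also have "fst -` A \<inter> space J = A \<times> UNIV"
    using sets_eq_imp_space_eq[OF sets_J] by (auto simp: space_pair_measure)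
  also have "emeasure J (A \<times> UNIV) = (\<integral>\<^sup>+ x. \<integral>\<^sup>+ y. indicator A x \<partial>K x \<partial>PX)"
    using A' by (subst emeasure_J) (auto simp: indicator_def intro!: nn_integral_cong)
  also have "\<dots> = (\<integral>\<^sup>+ x. indicator A x \<partial>PX)"
    by (intro nn_integral_cong) (simp add: prob_space.emeasure_space_1[OF K_prob, simplified])
  also have "\<dots> = emeasure PX A" using A' by (simp add: PX(2))
  finally show "emeasure (distr J borel fst) A = emeasure PX A" .
qed

lemma distr_J_snd: "distr J borel snd = PY"
proof (rule measure_eqI)
  show "sets (distr J borel snd) = sets PY" by (simp add: sets_PY)
  fix A assume A: "A \<in> sets (distr J borel snd)"
  hence A'[measurable]: "A \<in> sets borel" by simp
  have "emeasure (distr J borel snd) A = emeasure J (snd -` A \<inter> space J)"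
    by (rule emeasure_distr) (auto simp: A' cong: measurable_cong_sets[OF sets_J refl])
  also have "snd -` A \<inter> space J = UNIV \<times> A"
    using sets_eq_imp_space_eq[OF sets_J] by (auto simp: space_pair_measure)
  also have "emeasure J (UNIV \<times> A) = (\<integral>\<^sup>+ x. \<integral>\<^sup>+ y. indicator A y \<partial>K x \<partial>PX)"
  proof -
    have eq: "\<And>x y. indicator (UNIV \<times> A) (x,y) = (indicator A y :: ennreal)" by (simp add: indicator_def)
    have m: "UNIV \<times> A \<in> sets (borel \<Otimes>\<^sub>M borel)" using A' by measurable
    show ?thesis unfolding emeasure_J[OF m] by (intro nn_integral_cong) (rule eq)
  qed
  also have "\<dots> = (\<integral>\<^sup>+ y. indicator A y \<partial>PY)"
    by (rule nn_integral_PY[symmetric]) simp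
  also have "\<dots> = emeasure PY A" using A' by (simp add: sets_PY)
  finally show "emeasure (distr J borel snd) A = emeasure PY A" .
qed

end

lemma pair_sf: "prob_space A \<Longrightarrow> prob_space B \<Longrightarrow> pair_sigma_finite A B"
  unfolding pair_sigma_finite_def by (auto intro: prob_space_imp_sigma_finite)

context chan begin

interpretation X: real_distribution PX by (rule PXd)
interpretation Y: real_distribution PY by (rule PYd)

lemmas mqX[measurable] = measurable_quantile[OF PXd]
lemmas mqY[measurable] = measurable_quantile[OF PYd]
lemmas mrX[measurable (raw)] = measurable_rp[OF PXd]
lemmas mrY[measurable (raw)] = measurable_rp[OF PYd]

lemma NJ_eq: "NJ = unif01 \<bind> (\<lambda>th. K (quantile (cdf PX) th) \<bind> (\<lambda>y. unif01 \<bind> (\<lambda>l.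
       return (borel \<Otimes>\<^sub>M borel) (th, rp PY y l))))"
  unfolding norm_joint_def rp_def ..

lemma NJ_kernel2: "(\<lambda>(th, y). unif01 \<bind> (\<lambda>l. return (borel \<Otimes>\<^sub>M borel) (th, rp PY y l)))
    \<in> borel \<Otimes>\<^sub>M borel \<rightarrow>\<^sub>M prob_algebra (borel \<Otimes>\<^sub>M borel)"
  by measurable

lemma NJ_kernel1: "(\<lambda>th. K (quantile (cdf PX) th) \<bind> (\<lambda>y. unif01 \<bind> (\<lambda>l.
       return (borel \<Otimes>\<^sub>M borel) (th, rp PY y l)))) \<in> borel \<rightarrow>\<^sub>M prob_algebra (borel \<Otimes>\<^sub>M borel)"
  using NJ_kernel2 by measurable

lemma sets_NJ[measurable_cong]: "sets NJ = sets (borel \<Otimes>\<^sub>M borel)"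
  unfolding NJ_eq
  by (rule sets_bind[where N="borel \<Otimes>\<^sub>M borel"])
     (auto simp: sets_kernel[OF measurable_prob_algebraD[OF NJ_kernel1]])

lemma nn_integral_NJ: assumes H[measurable]: "H \<in> borel_measurable (borel \<Otimes>\<^sub>M borel)"
  shows "(\<integral>\<^sup>+ z. H z \<partial>NJ) = (\<integral>\<^sup>+ th. \<integral>\<^sup>+ y. \<integral>\<^sup>+ l. H (th, rp PY y l) \<partial>unif01 \<partial>K (quantile (cdf PX) th) \<partial>unif01)"
proof -
  have "(\<integral>\<^sup>+ z. H z \<partial>NJ) = (\<integral>\<^sup>+ th. \<integral>\<^sup>+ z. H z \<partial>(K (quantile (cdf PX) th) \<bind> (\<lambda>y. unif01 \<bind> (\<lambda>l.
       return (borel \<Otimes>\<^sub>M borel) (th, rp PY y l)))) \<partial>unif01)"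
    unfolding NJ_eq
    by (rule nn_integral_bind[OF H]) (use measurable_prob_algebraD[OF NJ_kernel1] in \<open>simp cong: measurable_cong_sets\<close>)
  also have "\<dots> = (\<integral>\<^sup>+ th. \<integral>\<^sup>+ y. \<integral>\<^sup>+ l. H (th, rp PY y l) \<partial>unif01 \<partial>K (quantile (cdf PX) th) \<partial>unif01)"
  proof (intro nn_integral_cong)
    fix th :: real
    have k2: "(\<lambda>y. unif01 \<bind> (\<lambda>l. return (borel \<Otimes>\<^sub>M borel) (th, rp PY y l)))
       \<in> K (quantile (cdf PX) th) \<rightarrow>\<^sub>M subprob_algebra (borel \<Otimes>\<^sub>M borel)"
    proof -
      have "(\<lambda>y. unif01 \<bind> (\<lambda>l. return (borel \<Otimes>\<^sub>M borel) (th, rp PY y l))) \<in> borel \<rightarrow>\<^sub>M prob_algebra (borel \<Otimes>\<^sub>M borel)"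
        using measurable_Pair2[OF NJ_kernel2, of th] by simp
      thus ?thesis using sets_K by (intro measurable_prob_algebraD) (simp cong: measurable_cong_sets)
    qed
    have k3: "(\<lambda>l. return (borel \<Otimes>\<^sub>M borel) (th, rp PY y l)) \<in> unif01 \<rightarrow>\<^sub>M subprob_algebra (borel \<Otimes>\<^sub>M borel)" for y
      by measurable
    show "(\<integral>\<^sup>+ z. H z \<partial>(K (quantile (cdf PX) th) \<bind> (\<lambda>y. unif01 \<bind> (\<lambda>l. return (borel \<Otimes>\<^sub>M borel) (th, rp PY y l)))))
       = (\<integral>\<^sup>+ y. \<integral>\<^sup>+ l. H (th, rp PY y l) \<partial>unif01 \<partial>K (quantile (cdf PX) th))"
      by (subst nn_integral_bind[OF H k2], intro nn_integral_cong, subst nn_integral_bind[OF H k3],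
          intro nn_integral_cong, subst nn_integral_return) (auto simp: space_pair_measure)
  qed
  finally show ?thesis .
qed

end

context chan begin

interpretation X: real_distribution PX by (rule PXd)
interpretation Y: real_distribution PY by (rule PYd)

lemma KI:
  assumes H[measurable]: "H \<in> borel_measurable (borel \<Otimes>\<^sub>M borel)"
    and f[measurable]: "f \<in> borel_measurable (borel \<Otimes>\<^sub>M borel)"
    and Jf: "\<And>G. G \<in> borel_measurable (borel \<Otimes>\<^sub>M borel) \<Longrightarrow>
               (\<integral>\<^sup>+ z. G z \<partial>J) = (\<integral>\<^sup>+ z. f z * G z \<partial>(PX \<Otimes>\<^sub>M PY))"
  shows "(\<integral>\<^sup>+ z. H z \<partial>NJ) =
     (\<integral>\<^sup>+ th. \<integral>\<^sup>+ ph. H (th, ph) * f (quantile (cdf PX) th, quantile (cdf PY) ph) \<partial>unif01 \<partial>unif01)"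
proof -
  define k where "k x y = (\<integral>\<^sup>+ l'. \<integral>\<^sup>+ l. H (rp PX x l', rp PY y l) \<partial>unif01 \<partial>unif01)" for x y
  have k[measurable]: "(\<lambda>(x, y). k x y) \<in> borel_measurable (borel \<Otimes>\<^sub>M borel)"
    unfolding k_def by measurable
  define V where "V th x = (\<integral>\<^sup>+ y. \<integral>\<^sup>+ l. H (th, rp PY y l) \<partial>unif01 \<partial>K x)" for th x
  have V[measurable]: "(\<lambda>(th, x). V th x) \<in> borel_measurable (borel \<Otimes>\<^sub>M borel)"
  proof -
    have 1: "(\<lambda>(z, y). \<integral>\<^sup>+ l. H (fst z, rp PY y l) \<partial>unif01) \<in> borel_measurable ((borel \<Otimes>\<^sub>M borel) \<Otimes>\<^sub>M borel)"
      by measurable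
    have 2: "(\<lambda>z. K (snd z)) \<in> borel \<Otimes>\<^sub>M borel \<rightarrow>\<^sub>M subprob_algebra borel" by measurable
    have "(\<lambda>z. \<integral>\<^sup>+ y. \<integral>\<^sup>+ l. H (fst z, rp PY y l) \<partial>unif01 \<partial>K (snd z)) \<in> borel_measurable (borel \<Otimes>\<^sub>M borel)"
      using nn_integral_measurable_subprob_algebra2[OF 1 2] by simp
    thus ?thesis unfolding V_def by (simp add: case_prod_beta')
  qed
  have "(\<integral>\<^sup>+ z. H z \<partial>NJ) = (\<integral>\<^sup>+ th. V th (quantile (cdf PX) th) \<partial>unif01)"
    unfolding nn_integral_NJ[OF H] V_def ..
  also have "\<dots> = (\<integral>\<^sup>+ x. \<integral>\<^sup>+ l'. V (rp PX x l') x \<partial>unif01 \<partial>PX)"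
    by (rule L2[OF PXd V])
  also have "\<dots> = (\<integral>\<^sup>+ x. \<integral>\<^sup>+ y. k x y \<partial>K x \<partial>PX)"
  proof (intro nn_integral_cong)
    fix x
    interpret UK: pair_sigma_finite unif01 "K x" by (rule pair_sf[OF prob_space_unif01 K_prob])
    have m: "(\<lambda>(l', y). \<integral>\<^sup>+ l. H (rp PX x l', rp PY y l) \<partial>unif01) \<in> borel_measurable (unif01 \<Otimes>\<^sub>M K x)"
      by (simp cong: measurable_cong_sets add: sets_K) measurable
    show "(\<integral>\<^sup>+ l'. V (rp PX x l') x \<partial>unif01) = (\<integral>\<^sup>+ y. k x y \<partial>K x)"
      unfolding V_def k_def using UK.Fubini'[OF m] by simp
  qed
  also have "\<dots> = (\<integral>\<^sup>+ z. (\<lambda>(x, y). k x y) z \<partial>J)"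
    by (subst nn_integral_J[OF k]) simp
  also have "\<dots> = (\<integral>\<^sup>+ z. f z * (\<lambda>(x, y). k x y) z \<partial>(PX \<Otimes>\<^sub>M PY))"
    by (rule Jf[OF k])
  also have "\<dots> = (\<integral>\<^sup>+ x. \<integral>\<^sup>+ y. f (x, y) * k x y \<partial>PY \<partial>PX)"
    by (subst Y.nn_integral_fst[symmetric]) (auto cong: measurable_cong_sets simp: PX(2) sets_PY)
  finally have L: "(\<integral>\<^sup>+ z. H z \<partial>NJ) = (\<integral>\<^sup>+ x. \<integral>\<^sup>+ y. f (x, y) * k x y \<partial>PY \<partial>PX)" .

  define V' where "V' th x = (\<integral>\<^sup>+ y. \<integral>\<^sup>+ l. H (th, rp PY y l) * f (x, y) \<partial>unif01 \<partial>PY)" for th x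
  have V'[measurable]: "(\<lambda>(th, x). V' th x) \<in> borel_measurable (borel \<Otimes>\<^sub>M borel)"
    unfolding V'_def by measurable
  have "(\<integral>\<^sup>+ th. \<integral>\<^sup>+ ph. H (th, ph) * f (quantile (cdf PX) th, quantile (cdf PY) ph) \<partial>unif01 \<partial>unif01)
      = (\<integral>\<^sup>+ th. V' th (quantile (cdf PX) th) \<partial>unif01)"
  proof (intro nn_integral_cong)
    fix th
    have m: "(\<lambda>(ph, y). H (th, ph) * f (quantile (cdf PX) th, y)) \<in> borel_measurable (borel \<Otimes>\<^sub>M borel)"
      by measurable
    show "(\<integral>\<^sup>+ ph. H (th, ph) * f (quantile (cdf PX) th, quantile (cdf PY) ph) \<partial>unif01) = V' th (quantile (cdf PX) th)"
      unfolding V'_def using L2[OF PYd m] by simp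
  qed
  also have "\<dots> = (\<integral>\<^sup>+ x. \<integral>\<^sup>+ l'. V' (rp PX x l') x \<partial>unif01 \<partial>PX)"
    by (rule L2[OF PXd V'])
  also have "\<dots> = (\<integral>\<^sup>+ x. \<integral>\<^sup>+ y. f (x, y) * k x y \<partial>PY \<partial>PX)"
  proof (intro nn_integral_cong)
    fix x
    interpret UY: pair_sigma_finite unif01 PY by (rule pair_sf[OF prob_space_unif01 Y.prob_space_axioms])
    have m: "(\<lambda>(l', y). \<integral>\<^sup>+ l. H (rp PX x l', rp PY y l) * f (x, y) \<partial>unif01) \<in> borel_measurable (unif01 \<Otimes>\<^sub>M PY)"
      by (simp cong: measurable_cong_sets add: sets_PY) measurable
    have "(\<integral>\<^sup>+ l'. V' (rp PX x l') x \<partial>unif01) = (\<integral>\<^sup>+ y. \<integral>\<^sup>+ l'. \<integral>\<^sup>+ l. H (rp PX x l', rp PY y l) * f (x, y) \<partial>unif01 \<partial>unif01 \<partial>PY)"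
      unfolding V'_def using UY.Fubini'[OF m] by simp
    also have "\<dots> = (\<integral>\<^sup>+ y. f (x, y) * k x y \<partial>PY)"
    proof (intro nn_integral_cong)
      fix y
      have "(\<integral>\<^sup>+ l'. \<integral>\<^sup>+ l. H (rp PX x l', rp PY y l) * f (x, y) \<partial>unif01 \<partial>unif01)
          = (\<integral>\<^sup>+ l'. (\<integral>\<^sup>+ l. H (rp PX x l', rp PY y l) \<partial>unif01) * f (x, y) \<partial>unif01)"
        by (intro nn_integral_cong nn_integral_multc) measurable
      also have "\<dots> = k x y * f (x, y)"
        unfolding k_def by (rule nn_integral_multc) measurable
      finally show "(\<integral>\<^sup>+ l'. \<integral>\<^sup>+ l. H (rp PX x l', rp PY y l) * f (x, y) \<partial>unif01 \<partial>unif01) = f (x, y) * k x y"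
        by (simp add: mult.commute)
    qed
    finally show "(\<integral>\<^sup>+ l'. V' (rp PX x l') x \<partial>unif01) = (\<integral>\<^sup>+ y. f (x, y) * k x y \<partial>PY)" .
  qed
  finally show ?thesis using L by simp
qed

end

abbreviation "UU \<equiv> unif01 \<Otimes>\<^sub>M unif01"

interpretation UU: pair_prob_space unif01 unif01
  by (intro pair_prob_space.intro pair_sf prob_space_unif01)

lemma sets_UU[measurable_cong]: "sets UU = sets (borel \<Otimes>\<^sub>M borel)"
  by (rule sets_pair_measure_cong) simp_all

context chan begin

interpretation X: real_distribution PX by (rule PXd)
interpretation Y: real_distribution PY by (rule PYd)

lemma emeasure_U: "A \<in> sets borel \<Longrightarrow> (\<integral>\<^sup>+ u. indicator A u \<partial>unif01) = emeasure unif01 A"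
  by simp

lemma distr_NJ_snd: "distr NJ borel snd = unif01"
proof (rule measure_eqI)
  show "sets (distr NJ borel snd) = sets unif01" by simp
  fix A assume "A \<in> sets (distr NJ borel snd)"
  hence A[measurable]: "A \<in> sets borel" by simp
  define h where "h y = (\<integral>\<^sup>+ l. indicator A (rp PY y l) \<partial>unif01)" for y
  have h[measurable]: "h \<in> borel_measurable borel" unfolding h_def by measurable
  have "emeasure (distr NJ borel snd) A = (\<integral>\<^sup>+ z. indicator A (snd z) \<partial>NJ)"
  proof -
    have "emeasure (distr NJ borel snd) A = emeasure NJ (snd -` A \<inter> space NJ)"
      by (rule emeasure_distr) (auto cong: measurable_cong_sets[OF sets_NJ refl])
    also have "snd -` A \<inter> space NJ = UNIV \<times> A"
      by (auto simp: sets_eq_imp_space_eq[OF sets_NJ] space_pair_measure)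
    also have "emeasure NJ (UNIV \<times> A) = (\<integral>\<^sup>+ z. indicator (UNIV \<times> A) z \<partial>NJ)"
      by (rule nn_integral_indicator[symmetric]) (simp add: sets_NJ)
    also have "(\<lambda>z. indicator (UNIV \<times> A) z :: ennreal) = (\<lambda>z. indicator A (snd z))"
      by (auto simp: indicator_def)
    finally show ?thesis .
  qed
  also have "\<dots> = (\<integral>\<^sup>+ th. (\<lambda>x. \<integral>\<^sup>+ y. h y \<partial>K x) (quantile (cdf PX) th) \<partial>unif01)"
    by (subst nn_integral_NJ) (simp_all add: h_def[abs_def])
  also have "\<dots> = (\<integral>\<^sup>+ x. \<integral>\<^sup>+ y. h y \<partial>K x \<partial>PX)"
    by (rule quantile_transform[OF PXd]) measurable
  also have "\<dots> = (\<integral>\<^sup>+ y. h y \<partial>PY)" by (rule nn_integral_PY[symmetric]) (rule h)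
  also have "\<dots> = (\<integral>\<^sup>+ u. (\<lambda>u y. indicator A u) u (quantile (cdf PY) u) \<partial>unif01)"
    unfolding h_def by (rule L2[OF PYd, symmetric]) measurable
  also have "\<dots> = emeasure unif01 A" by simp
  finally show "emeasure (distr NJ borel snd) A = emeasure unif01 A" .
qed

lemma distr_NJ_fst: "distr NJ borel fst = unif01"
proof (rule measure_eqI)
  show "sets (distr NJ borel fst) = sets unif01" by simp
  fix A assume "A \<in> sets (distr NJ borel fst)"
  hence A[measurable]: "A \<in> sets borel" by simp
  have "emeasure (distr NJ borel fst) A = (\<integral>\<^sup>+ z. indicator A (fst z) \<partial>NJ)"
  proof -
    have "emeasure (distr NJ borel fst) A = emeasure NJ (fst -` A \<inter> space NJ)"
      by (rule emeasure_distr) (auto cong: measurable_cong_sets[OF sets_NJ refl])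
    also have "fst -` A \<inter> space NJ = A \<times> UNIV"
      by (auto simp: sets_eq_imp_space_eq[OF sets_NJ] space_pair_measure)
    also have "emeasure NJ (A \<times> UNIV) = (\<integral>\<^sup>+ z. indicator (A \<times> UNIV) z \<partial>NJ)"
      by (rule nn_integral_indicator[symmetric]) (simp add: sets_NJ)
    also have "(\<lambda>z. indicator (A \<times> UNIV) z :: ennreal) = (\<lambda>z. indicator A (fst z))"
      by (auto simp: indicator_def)
    finally show ?thesis .
  qed
  also have "\<dots> = (\<integral>\<^sup>+ th. \<integral>\<^sup>+ y. \<integral>\<^sup>+ l. indicator A th \<partial>unif01 \<partial>K (quantile (cdf PX) th) \<partial>unif01)"
    by (subst nn_integral_NJ) simp_all
  also have "\<dots> = (\<integral>\<^sup>+ th. indicator A th \<partial>unif01)"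
  proof (intro nn_integral_cong)
    fix th
    have "emeasure unif01 UNIV = 1" using U.emeasure_space_1 by simp
    moreover have "emeasure (K x) UNIV = 1" for x using prob_space.emeasure_space_1[OF K_prob, of x] by simp
    ultimately show "(\<integral>\<^sup>+ y. \<integral>\<^sup>+ l. indicator A th \<partial>unif01 \<partial>K (quantile (cdf PX) th)) = indicator A th"
      by simp
  qed
  also have "\<dots> = emeasure unif01 A" by simp
  finally show "emeasure (distr NJ borel fst) A = emeasure unif01 A" .
qed

lemma KI2: assumes W[measurable]: "W \<in> borel_measurable (borel \<Otimes>\<^sub>M borel)"
  shows "(\<integral>\<^sup>+ z. W (quantile (cdf PX) (fst z), quantile (cdf PY) (snd z)) \<partial>UU) = (\<integral>\<^sup>+ z. W z \<partial>(PX \<Otimes>\<^sub>M PY))"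
proof -
  have "(\<integral>\<^sup>+ z. W (quantile (cdf PX) (fst z), quantile (cdf PY) (snd z)) \<partial>UU)
     = (\<integral>\<^sup>+ th. \<integral>\<^sup>+ ph. W (quantile (cdf PX) th, quantile (cdf PY) ph) \<partial>unif01 \<partial>unif01)"
    by (subst U.nn_integral_fst[symmetric]) (simp_all cong: measurable_cong_sets)
  also have "\<dots> = (\<integral>\<^sup>+ th. \<integral>\<^sup>+ y. W (quantile (cdf PX) th, y) \<partial>PY \<partial>unif01)"
    by (intro nn_integral_cong quantile_transform[OF PYd]) measurable
  also have "\<dots> = (\<integral>\<^sup>+ x. \<integral>\<^sup>+ y. W (x, y) \<partial>PY \<partial>PX)"
    by (rule quantile_transform[OF PXd, where w="\<lambda>x. \<integral>\<^sup>+ y. W (x, y) \<partial>PY"]) measurable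
  also have "\<dots> = (\<integral>\<^sup>+ z. W z \<partial>(PX \<Otimes>\<^sub>M PY))"
    by (rule Y.nn_integral_fst) (simp cong: measurable_cong_sets add: PX(2) sets_PY)
  finally show ?thesis .
qed

lemma NJ_density:
  assumes f[measurable]: "f \<in> borel_measurable (borel \<Otimes>\<^sub>M borel)"
    and Jf: "\<And>G. G \<in> borel_measurable (borel \<Otimes>\<^sub>M borel) \<Longrightarrow>
               (\<integral>\<^sup>+ z. G z \<partial>J) = (\<integral>\<^sup>+ z. f z * G z \<partial>(PX \<Otimes>\<^sub>M PY))"
  shows "NJ = density UU (\<lambda>z. f (quantile (cdf PX) (fst z), quantile (cdf PY) (snd z)))"
proof (rule measure_eqI)
  show "sets NJ = sets (density UU (\<lambda>z. f (quantile (cdf PX) (fst z), quantile (cdf PY) (snd z))))"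
    by (simp add: sets_NJ sets_UU)
  fix A assume "A \<in> sets NJ"
  hence A[measurable]: "A \<in> sets (borel \<Otimes>\<^sub>M borel)" by (simp add: sets_NJ)
  have "emeasure NJ A = (\<integral>\<^sup>+ z. indicator A z \<partial>NJ)" using A by (simp add: sets_NJ)
  also have "\<dots> = (\<integral>\<^sup>+ th. \<integral>\<^sup>+ ph. indicator A (th, ph) * f (quantile (cdf PX) th, quantile (cdf PY) ph) \<partial>unif01 \<partial>unif01)"
    by (rule KI[OF _ f Jf]) simp_all
  also have "\<dots> = (\<integral>\<^sup>+ z. f (quantile (cdf PX) (fst z), quantile (cdf PY) (snd z)) * indicator A z \<partial>UU)"
    by (subst U.nn_integral_fst[symmetric]) (simp_all cong: measurable_cong_sets add: mult.commute)
  also have "\<dots> = emeasure (density UU (\<lambda>z. f (quantile (cdf PX) (fst z), quantile (cdf PY) (snd z)))) A"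
    by (subst emeasure_density) (simp_all cong: measurable_cong_sets add: sets_UU)
  finally show "emeasure NJ A = emeasure (density UU (\<lambda>z. f (quantile (cdf PX) (fst z), quantile (cdf PY) (snd z)))) A" .
qed

end

locale chanMI = chan +
  assumes finiteMI: "mutual_info (joint_dist PX K) < \<infinity>"
begin

interpretation X: real_distribution PX by (rule PXd)
interpretation Y: real_distribution PY by (rule PYd)
interpretation XY: pair_prob_space PX PY by (intro pair_prob_space.intro pair_sf X.prob_space_axioms Y.prob_space_axioms)

abbreviation "Q \<equiv> PX \<Otimes>\<^sub>M PY"

lemma sets_Q[measurable_cong]: "sets Q = sets (borel \<Otimes>\<^sub>M borel)"
  by (rule sets_pair_measure_cong) (simp_all add: PX(2) sets_PY)

lemma MI_J: "mutual_info J = KL_div J Q"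
  unfolding mutual_info_def distr_J_fst distr_J_snd ..

lemma ac: "absolutely_continuous Q J"
  using finiteMI unfolding MI_J KL_div_def by (auto split: if_splits)

definition "f = RN_deriv Q J"

lemma f_meas[measurable]: "f \<in> borel_measurable (borel \<Otimes>\<^sub>M borel)"
  unfolding f_def using borel_measurable_RN_deriv[of Q J] by (simp cong: measurable_cong_sets)

lemma Jf: "G \<in> borel_measurable (borel \<Otimes>\<^sub>M borel) \<Longrightarrow> (\<integral>\<^sup>+ z. G z \<partial>J) = (\<integral>\<^sup>+ z. f z * G z \<partial>Q)"
  unfolding f_def
  by (rule XY.RN_deriv_nn_integral[OF ac]) (simp_all add: sets_J sets_Q cong: measurable_cong_sets)

definition "g z = f (quantile (cdf PX) (fst z), quantile (cdf PY) (snd z))"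

lemma g_meas[measurable]: "g \<in> borel_measurable (borel \<Otimes>\<^sub>M borel)"
  unfolding g_def[abs_def] by measurable

lemma NJ_dens: "NJ = density UU g"
  unfolding g_def[abs_def] by (rule NJ_density[OF f_meas Jf])

lemma ac_NJ: "absolutely_continuous UU NJ"
  unfolding NJ_dens by (rule absolutely_continuousI_density) (simp cong: measurable_cong_sets)

lemma RN_NJ: "AE z in UU. g z = RN_deriv UU NJ z"
  by (rule UU.RN_deriv_unique) (simp_all add: NJ_dens cong: measurable_cong_sets)

lemma KL_int:
  assumes phi[measurable]: "phi \<in> borel_measurable (borel :: real measure)"
  shows "(\<integral>\<^sup>+ z. ennreal (phi (enn2real (RN_deriv UU NJ z))) \<partial>UU) = (\<integral>\<^sup>+ z. ennreal (phi (enn2real (RN_deriv Q J z))) \<partial>Q)"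
proof -
  have "(\<integral>\<^sup>+ z. ennreal (phi (enn2real (RN_deriv UU NJ z))) \<partial>UU) = (\<integral>\<^sup>+ z. ennreal (phi (enn2real (g z))) \<partial>UU)"
    by (rule nn_integral_cong_AE) (use RN_NJ in \<open>auto elim: AE_mp\<close>)
  also have "\<dots> = (\<integral>\<^sup>+ z. ennreal (phi (enn2real (f z))) \<partial>Q)"
    unfolding g_def by (rule KI2) measurable
  finally show ?thesis unfolding f_def .
qed

lemma MI_eq: "mutual_info NJ = mutual_info J"
proof -
  have "mutual_info NJ = KL_div NJ UU"
    unfolding mutual_info_def distr_NJ_fst distr_NJ_snd ..
  also have "\<dots> = KL_div J Q"
    unfolding KL_div_def Let_def using ac ac_NJ
    by (simp add: KL_int[of "\<lambda>t. t * ln t"] KL_int[of "\<lambda>t. - (t * ln t)"])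
  finally show ?thesis unfolding MI_J .
qed

lemma NJ_prob: "prob_space NJ"
proof
  have "emeasure NJ (space NJ) = emeasure (distr NJ borel fst) UNIV"
    by (subst emeasure_distr) (auto simp: sets_eq_imp_space_eq[OF sets_NJ] space_pair_measure cong: measurable_cong_sets[OF sets_NJ refl])
  thus "emeasure NJ (space NJ) = 1" unfolding distr_NJ_fst using U.emeasure_space_1 by simp
qed

lemma NJ_box: "emeasure NJ ({0<..<1} \<times> {0<..<1}) = 1"
proof (rule prob_space.emeasure_eq_1_AE[OF NJ_prob])
  show "{0<..<1::real} \<times> {0<..<1::real} \<in> sets NJ" by (simp add: sets_NJ)
  have mf: "fst \<in> NJ \<rightarrow>\<^sub>M borel" "snd \<in> NJ \<rightarrow>\<^sub>M borel" by (simp_all cong: measurable_cong_sets[OF sets_NJ refl])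
  have "AE z in NJ. 0 < fst z \<and> fst z < 1"
    using AE_unif01 unfolding distr_NJ_fst[symmetric] by (subst (asm) AE_distr_iff[OF mf(1)]) auto
  moreover have "AE z in NJ. 0 < snd z \<and> snd z < 1"
    using AE_unif01 unfolding distr_NJ_snd[symmetric] by (subst (asm) AE_distr_iff[OF mf(2)]) auto
  ultimately show "AE z in NJ. z \<in> {0<..<1} \<times> {0<..<1}" by eventually_elim (auto simp: mem_Times_iff)
qed

lemma ac_lborel: "absolutely_continuous (lborel \<Otimes>\<^sub>M lborel) NJ"
  unfolding absolutely_continuous_def
proof
  fix N :: "(real \<times> real) set" assume N: "N \<in> null_sets (lborel \<Otimes>\<^sub>M lborel)"
  hence Ns[measurable]: "N \<in> sets (borel \<Otimes>\<^sub>M borel)"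
    by (simp add: null_sets_def sets_pair_measure_cong[OF sets_lborel sets_lborel])
  have "emeasure UU N = (\<integral>\<^sup>+ x. \<integral>\<^sup>+ y. indicator N (x, y) \<partial>unif01 \<partial>unif01)"
    by (subst U.nn_integral_fst) (simp_all add: sets_UU cong: measurable_cong_sets)
  also have "\<dots> \<le> (\<integral>\<^sup>+ x. \<integral>\<^sup>+ y. indicator N (x, y) \<partial>lborel \<partial>unif01)"
  proof (intro nn_integral_mono)
    fix x
    have "(\<integral>\<^sup>+ y. indicator N (x, y) \<partial>unif01) = (\<integral>\<^sup>+ y. indicator N (x, y) * indicator {0<..<1} y \<partial>lborel)"
      by (rule nn_integral_unif01) measurable
    also have "\<dots> \<le> (\<integral>\<^sup>+ y. indicator N (x, y) \<partial>lborel)"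
      by (intro nn_integral_mono) (auto simp: indicator_def)
    finally show "(\<integral>\<^sup>+ y. indicator N (x, y) \<partial>unif01) \<le> (\<integral>\<^sup>+ y. indicator N (x, y) \<partial>lborel)" .
  qed
  also have "\<dots> \<le> (\<integral>\<^sup>+ x. \<integral>\<^sup>+ y. indicator N (x, y) \<partial>lborel \<partial>lborel)"
  proof -
    have m: "(\<lambda>x. \<integral>\<^sup>+ y. indicator N (x, y) \<partial>lborel) \<in> borel_measurable borel" by measurable
    show ?thesis
      by (subst nn_integral_unif01[OF m]) (intro nn_integral_mono, auto simp: indicator_def)
  qed
  also have "\<dots> = emeasure (lborel \<Otimes>\<^sub>M lborel) N"
    using N by (subst lborel.nn_integral_fst) (simp_all add: null_sets_def)
  also have "\<dots> = 0" using N by (rule null_setsD1)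
  finally have "N \<in> null_sets UU" using Ns by (simp add: null_sets_def sets_UU)
  thus "N \<in> null_sets NJ" using ac_NJ unfolding absolutely_continuous_def by blast
qed

end

lemma rep_kernel:
  assumes k[measurable]: "k \<in> borel \<rightarrow>\<^sub>M prob_algebra borel"
  shows "(\<lambda>ph. k ph \<bind> (\<lambda>th. return (borel \<Otimes>\<^sub>M borel) (th, ph))) \<in> borel \<rightarrow>\<^sub>M prob_algebra (borel \<Otimes>\<^sub>M borel)"
  by measurable

lemma rep_sets:
  assumes k: "k \<in> borel \<rightarrow>\<^sub>M prob_algebra borel"
  shows "sets (unif01 \<bind> (\<lambda>ph. k ph \<bind> (\<lambda>th. return (borel \<Otimes>\<^sub>M borel) (th, ph)))) = sets (borel \<Otimes>\<^sub>M borel)"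
  by (rule sets_bind[where N="borel \<Otimes>\<^sub>M borel"])
     (auto simp: sets_kernel[OF measurable_prob_algebraD[OF rep_kernel[OF k]]])

lemma rep_nn:
  assumes k[measurable]: "k \<in> borel \<rightarrow>\<^sub>M prob_algebra borel"
    and h[measurable]: "h \<in> borel_measurable (borel \<Otimes>\<^sub>M borel)"
  shows "(\<integral>\<^sup>+ z. h z \<partial>(unif01 \<bind> (\<lambda>ph. k ph \<bind> (\<lambda>th. return (borel \<Otimes>\<^sub>M borel) (th, ph)))))
     = (\<integral>\<^sup>+ ph. \<integral>\<^sup>+ th. h (th, ph) \<partial>k ph \<partial>unif01)"
proof -
  have k1: "(\<lambda>ph. k ph \<bind> (\<lambda>th. return (borel \<Otimes>\<^sub>M borel) (th, ph))) \<in> unif01 \<rightarrow>\<^sub>M subprob_algebra (borel \<Otimes>\<^sub>M borel)"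
    using measurable_prob_algebraD[OF rep_kernel[OF k]] by (simp cong: measurable_cong_sets)
  have sk: "sets (k ph) = sets borel" for ph
    using measurable_space[OF k, of ph] by (simp add: space_prob_algebra)
  show ?thesis
  proof (subst nn_integral_bind[OF h k1], intro nn_integral_cong)
    fix ph
    have k2: "(\<lambda>th. return (borel \<Otimes>\<^sub>M borel) (th, ph)) \<in> k ph \<rightarrow>\<^sub>M subprob_algebra (borel \<Otimes>\<^sub>M borel)"
      by (simp cong: measurable_cong_sets add: sk)
    show "(\<integral>\<^sup>+ z. h z \<partial>(k ph \<bind> (\<lambda>th. return (borel \<Otimes>\<^sub>M borel) (th, ph)))) = (\<integral>\<^sup>+ th. h (th, ph) \<partial>k ph)"
      by (subst nn_integral_bind[OF h k2], intro nn_integral_cong, subst nn_integral_return)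
         (auto simp: space_pair_measure)
  qed
qed

lemma (in chan) NJ_rect: assumes A[measurable]: "A \<in> sets (borel \<Otimes>\<^sub>M borel)"
  shows "emeasure NJ A = (\<integral>\<^sup>+ z. indicator A z \<partial>NJ)"
  using A by (simp add: sets_NJ)

context chanMI begin

lemma NJ_snd_rect: assumes B[measurable]: "B \<in> sets borel" shows "emeasure NJ (UNIV \<times> B) = emeasure unif01 B"
proof -
  have "emeasure (distr NJ borel snd) B = emeasure NJ (snd -` B \<inter> space NJ)"
    by (rule emeasure_distr) (auto cong: measurable_cong_sets[OF sets_NJ refl])
  also have "snd -` B \<inter> space NJ = UNIV \<times> B"
    by (auto simp: sets_eq_imp_space_eq[OF sets_NJ] space_pair_measure)
  finally show ?thesis unfolding distr_NJ_snd by simp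
qed

definition "c ph = (\<integral>\<^sup>+ th. g (th, ph) \<partial>unif01)"

lemma c_meas[measurable]: "c \<in> borel_measurable borel"
  unfolding c_def[abs_def] by measurable

lemma NJ_int: assumes h[measurable]: "h \<in> borel_measurable (borel \<Otimes>\<^sub>M borel)"
  shows "(\<integral>\<^sup>+ z. h z \<partial>NJ) = (\<integral>\<^sup>+ ph. \<integral>\<^sup>+ th. g (th, ph) * h (th, ph) \<partial>unif01 \<partial>unif01)"
proof -
  have m: "(\<lambda>z. g z * h z) \<in> borel_measurable UU" by (simp cong: measurable_cong_sets)
  have "(\<integral>\<^sup>+ z. h z \<partial>NJ) = (\<integral>\<^sup>+ z. g z * h z \<partial>UU)"
    unfolding NJ_dens by (rule nn_integral_density) (simp_all cong: measurable_cong_sets)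
  also have "\<dots> = (\<integral>\<^sup>+ ph. \<integral>\<^sup>+ th. g (th, ph) * h (th, ph) \<partial>unif01 \<partial>unif01)"
    using UU.nn_integral_snd[OF m] by simp
  finally show ?thesis .
qed

lemma c_ae: "AE ph in unif01. c ph = 1"
proof -
  have "density unif01 c = density unif01 (\<lambda>_. 1)"
  proof (rule measure_eqI)
    fix B assume "B \<in> sets (density unif01 c)"
    hence B[measurable]: "B \<in> sets borel" by simp
    have "emeasure (density unif01 c) B = (\<integral>\<^sup>+ ph. c ph * indicator B ph \<partial>unif01)"
      by (rule emeasure_density) simp_all
    also have "\<dots> = (\<integral>\<^sup>+ ph. \<integral>\<^sup>+ th. g (th, ph) * indicator (UNIV \<times> B) (th, ph) \<partial>unif01 \<partial>unif01)"
      unfolding c_def by (intro nn_integral_cong, subst nn_integral_multc[symmetric])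
        (auto simp: indicator_def)
    also have "\<dots> = (\<integral>\<^sup>+ z. indicator (UNIV \<times> B) z \<partial>NJ)"
      by (rule NJ_int[symmetric]) simp
    also have "\<dots> = emeasure unif01 B"
      using NJ_snd_rect[OF B] by (simp add: sets_NJ)
    also have "\<dots> = emeasure (density unif01 (\<lambda>_. 1)) B"
      by (simp add: emeasure_density)
    finally show "emeasure (density unif01 c) B = emeasure (density unif01 (\<lambda>_. 1)) B" .
  qed simp
  thus ?thesis by (intro U.density_unique) simp_all
qed

definition "kap0 ph = (if c ph = 1 then density unif01 (\<lambda>th. g (th, ph)) else unif01)"

lemma sets_kap0[measurable_cong]: "sets (kap0 ph) = sets borel"
  by (simp add: kap0_def)

lemma kap0_prob: "prob_space (kap0 ph)"
proof (cases "c ph = 1")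
  case True
  show ?thesis
  proof
    have "emeasure (kap0 ph) (space (kap0 ph)) = c ph"
      using True unfolding kap0_def c_def by (simp add: emeasure_density)
    thus "emeasure (kap0 ph) (space (kap0 ph)) = 1" using True by simp
  qed
qed (simp add: kap0_def prob_space_unif01)

lemma kap0_emeasure: "A \<in> sets borel \<Longrightarrow> emeasure (kap0 ph) A =
   (if c ph = 1 then (\<integral>\<^sup>+ th. g (th, ph) * indicator A th \<partial>unif01) else emeasure unif01 A)"
  unfolding kap0_def by (simp add: emeasure_density)

lemma kap0_meas[measurable]: "kap0 \<in> borel \<rightarrow>\<^sub>M prob_algebra borel"
proof (rule measurable_prob_algebraI)
  show "prob_space (kap0 x)" for x by (rule kap0_prob)
  show "kap0 \<in> borel \<rightarrow>\<^sub>M subprob_algebra borel"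
  proof (rule measurable_subprob_algebra)
    show "subprob_space (kap0 a)" for a by (rule prob_space_imp_subprob_space[OF kap0_prob])
    show "sets (kap0 a) = sets borel" for a by (rule sets_kap0)
    fix A :: "real set" assume A[measurable]: "A \<in> sets borel"
    have "(\<lambda>a. if c a = 1 then (\<integral>\<^sup>+ th. g (th, a) * indicator A th \<partial>unif01) else emeasure unif01 A) \<in> borel_measurable borel"
      by measurable
    thus "(\<lambda>a. emeasure (kap0 a) A) \<in> borel_measurable borel"
      by (subst measurable_cong[OF kap0_emeasure[OF A]]) simp_all
  qed
qed

lemma kap0_nn: "h \<in> borel_measurable borel \<Longrightarrow> c ph = 1 \<Longrightarrow> (\<integral>\<^sup>+ th. h th \<partial>kap0 ph) = (\<integral>\<^sup>+ th. g (th, ph) * h th \<partial>unif01)"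
  unfolding kap0_def by (simp add: nn_integral_density)

lemma kap0_rep: "NJ = unif01 \<bind> (\<lambda>ph. kap0 ph \<bind> (\<lambda>th. return (borel \<Otimes>\<^sub>M borel) (th, ph)))"
proof (rule measure_eqI)
  show "sets NJ = sets (unif01 \<bind> (\<lambda>ph. kap0 ph \<bind> (\<lambda>th. return (borel \<Otimes>\<^sub>M borel) (th, ph))))"
    by (simp add: sets_NJ rep_sets[OF kap0_meas])
  fix A assume "A \<in> sets NJ"
  hence A[measurable]: "A \<in> sets (borel \<Otimes>\<^sub>M borel)" by (simp add: sets_NJ)
  have "emeasure NJ A = (\<integral>\<^sup>+ ph. \<integral>\<^sup>+ th. g (th, ph) * indicator A (th, ph) \<partial>unif01 \<partial>unif01)"
    unfolding NJ_rect[OF A] by (rule NJ_int) simp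
  also have "\<dots> = (\<integral>\<^sup>+ ph. \<integral>\<^sup>+ th. indicator A (th, ph) \<partial>kap0 ph \<partial>unif01)"
  proof (rule nn_integral_cong_AE)
    show "AE ph in unif01. (\<integral>\<^sup>+ th. g (th, ph) * indicator A (th, ph) \<partial>unif01) = (\<integral>\<^sup>+ th. indicator A (th, ph) \<partial>kap0 ph)"
      using c_ae by eventually_elim (subst kap0_nn, simp_all)
  qed
  also have "\<dots> = (\<integral>\<^sup>+ z. indicator A z \<partial>(unif01 \<bind> (\<lambda>ph. kap0 ph \<bind> (\<lambda>th. return (borel \<Otimes>\<^sub>M borel) (th, ph)))))"
    by (rule rep_nn[OF kap0_meas, symmetric]) simp
  also have "\<dots> = emeasure (unif01 \<bind> (\<lambda>ph. kap0 ph \<bind> (\<lambda>th. return (borel \<Otimes>\<^sub>M borel) (th, ph)))) A"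
    using A by (simp add: rep_sets[OF kap0_meas])
  finally show "emeasure NJ A = emeasure (unif01 \<bind> (\<lambda>ph. kap0 ph \<bind> (\<lambda>th. return (borel \<Otimes>\<^sub>M borel) (th, ph)))) A" .
qed

end

context chanMI begin

lemma rep_rect:
  assumes k[measurable]: "k \<in> borel \<rightarrow>\<^sub>M prob_algebra borel"
    and rep: "NJ = unif01 \<bind> (\<lambda>ph. k ph \<bind> (\<lambda>th. return (borel \<Otimes>\<^sub>M borel) (th, ph)))"
    and A[measurable]: "A \<in> sets borel" and B[measurable]: "B \<in> sets borel"
  shows "emeasure NJ (A \<times> B) = (\<integral>\<^sup>+ ph. emeasure (k ph) A * indicator B ph \<partial>unif01)"
proof -
  have sk: "sets (k ph) = sets borel" for ph
    using measurable_space[OF k, of ph] by (simp add: space_prob_algebra)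
  have "emeasure NJ (A \<times> B) = (\<integral>\<^sup>+ z. indicator (A \<times> B) z \<partial>NJ)" by (rule NJ_rect) simp
  also have "\<dots> = (\<integral>\<^sup>+ ph. \<integral>\<^sup>+ th. indicator (A \<times> B) (th, ph) \<partial>k ph \<partial>unif01)"
    by (subst rep, rule rep_nn[OF k]) simp
  also have "\<dots> = (\<integral>\<^sup>+ ph. emeasure (k ph) A * indicator B ph \<partial>unif01)"
  proof (intro nn_integral_cong)
    fix ph
    have "(\<integral>\<^sup>+ th. indicator (A \<times> B) (th, ph) \<partial>k ph) = (\<integral>\<^sup>+ th. indicator B ph * indicator A th \<partial>k ph)"
      by (intro nn_integral_cong) (auto simp: indicator_def)
    also have "\<dots> = indicator B ph * emeasure (k ph) A"
      by (rule nn_integral_cmult_indicator) (simp add: sk)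
    finally show "(\<integral>\<^sup>+ th. indicator (A \<times> B) (th, ph) \<partial>k ph) = emeasure (k ph) A * indicator B ph"
      by (simp add: mult.commute)
  qed
  finally show ?thesis .
qed

lemma kap_eq_ae:
  assumes k[measurable]: "k \<in> borel \<rightarrow>\<^sub>M prob_algebra borel"
    and rep: "NJ = unif01 \<bind> (\<lambda>ph. k ph \<bind> (\<lambda>th. return (borel \<Otimes>\<^sub>M borel) (th, ph)))"
    and A[measurable]: "A \<in> sets borel"
  shows "AE ph in unif01. emeasure (k ph) A = emeasure (kap0 ph) A"
proof -
  have mk: "(\<lambda>ph. emeasure (k ph) A) \<in> borel_measurable borel"
    by (rule measurable_compose[OF measurable_prob_algebraD[OF k] measurable_emeasure_subprob_algebra]) simp
  have mk0: "(\<lambda>ph. emeasure (kap0 ph) A) \<in> borel_measurable borel"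
    by (rule measurable_compose[OF measurable_prob_algebraD[OF kap0_meas] measurable_emeasure_subprob_algebra]) simp
  have mkU: "(\<lambda>ph. emeasure (k ph) A) \<in> borel_measurable unif01" using mk by (simp cong: measurable_cong_sets)
  have mk0U: "(\<lambda>ph. emeasure (kap0 ph) A) \<in> borel_measurable unif01" using mk0 by (simp cong: measurable_cong_sets)
  have "density unif01 (\<lambda>ph. emeasure (k ph) A) = density unif01 (\<lambda>ph. emeasure (kap0 ph) A)"
  proof (rule measure_eqI)
    fix B assume "B \<in> sets (density unif01 (\<lambda>ph. emeasure (k ph) A))"
    hence B[measurable]: "B \<in> sets borel" by simp
    have "emeasure (density unif01 (\<lambda>ph. emeasure (k ph) A)) B = emeasure NJ (A \<times> B)"
      by (subst emeasure_density) (simp_all add: mkU rep_rect[OF k rep A B])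
    also have "\<dots> = emeasure (density unif01 (\<lambda>ph. emeasure (kap0 ph) A)) B"
      by (subst emeasure_density) (simp_all add: mk0U rep_rect[OF kap0_meas kap0_rep A B])
    finally show "emeasure (density unif01 (\<lambda>ph. emeasure (k ph) A)) B = emeasure (density unif01 (\<lambda>ph. emeasure (kap0 ph) A)) B" .
  qed simp
  thus ?thesis by (intro U.density_unique) (simp_all add: mkU mk0U)
qed

lemma U_singleton: "emeasure unif01 {t} = 0"
proof -
  have "emeasure unif01 {t} = emeasure lborel ({t} \<inter> {0<..<1})" by (simp add: emeasure_unif01)
  also have "\<dots> \<le> emeasure lborel {t}" by (intro emeasure_mono) auto
  finally show ?thesis by simp
qed

lemma kap0_singleton: "measure (kap0 ph) {t} = 0"
proof -
  have "emeasure (kap0 ph) {t} = 0"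
  proof (cases "c ph = 1")
    case True
    have "AE x in unif01. x \<noteq> t" by (rule AE_I'[of "{t}"]) (auto simp: U_singleton)
    hence "(\<integral>\<^sup>+ th. g (th, ph) * indicator {t} th \<partial>unif01) = (\<integral>\<^sup>+ th. 0 \<partial>unif01)"
      by (intro nn_integral_cong_AE) (auto elim: AE_mp)
    thus ?thesis using True by (simp add: kap0_emeasure)
  next
    case False
    thus ?thesis by (simp add: kap0_emeasure U_singleton)
  qed
  thus ?thesis by (simp add: measure_def)
qed

lemma kap_cont:
  assumes k[measurable]: "k \<in> borel \<rightarrow>\<^sub>M prob_algebra borel"
    and rep: "NJ = unif01 \<bind> (\<lambda>ph. k ph \<bind> (\<lambda>th. return (borel \<Otimes>\<^sub>M borel) (th, ph)))"
  shows "AE ph in unif01. continuous_on UNIV (\<lambda>th. cdf (k ph) th)"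
proof -
  have "AE ph in unif01. \<forall>r::rat. emeasure (k ph) {..real_of_rat r} = emeasure (kap0 ph) {..real_of_rat r}"
    unfolding AE_all_countable by (intro allI kap_eq_ae[OF k rep]) simp
  then show ?thesis
  proof (rule AE_mp, intro AE_I2 impI)
    fix ph assume H: "\<forall>r::rat. emeasure (k ph) {..real_of_rat r} = emeasure (kap0 ph) {..real_of_rat r}"
    have kd: "real_distribution (k ph)"
      using measurable_space[OF k, of ph] by (simp add: space_prob_algebra real_distribution_def real_distribution_axioms_def)
    interpret Kd: real_distribution "k ph" by (rule kd)
    have k0d: "real_distribution (kap0 ph)"
      using kap0_prob[of ph] sets_kap0[of ph] by (simp add: real_distribution_def real_distribution_axioms_def)
    interpret K0: real_distribution "kap0 ph" by (rule k0d)
    have cq: "cdf (k ph) x = cdf (kap0 ph) x" if xq: "x \<in> \<rat>" for x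
    proof -
      obtain r where "x = real_of_rat r" using xq by (auto elim!: Rats_cases)
      thus ?thesis using H unfolding cdf_def measure_def by auto
    qed
    have c0: "isCont (cdf (kap0 ph)) t" for t using K0.isCont_cdf kap0_singleton by simp
    have z: "measure (k ph) {t} = 0" for t
    proof -
      have "measure (k ph) {t} \<le> 0"
      proof (rule field_le_epsilon)
        fix e :: real assume e: "0 < e"
        obtain d where d: "d > 0" "\<And>x. x \<noteq> t \<Longrightarrow> norm (x - t) < d \<Longrightarrow> norm (cdf (kap0 ph) x - cdf (kap0 ph) t) < e / 2"
          using c0[of t] e unfolding isCont_def LIM_eq by (meson half_gt_zero)
        obtain a where a: "a \<in> \<rat>" "t - d < a" "a < t" using Rats_dense_in_real[of "t - d" t] d by auto
        obtain b where b: "b \<in> \<rat>" "t < b" "b < t + d" using Rats_dense_in_real[of t "t + d"] d by auto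
        have "measure (k ph) {t} \<le> measure (k ph) {a<..b}"
          by (rule Kd.finite_measure_mono) (use a b in auto)
        also have "\<dots> = cdf (k ph) b - cdf (k ph) a" using a b by (simp add: Kd.cdf_diff_eq)
        also have "\<dots> = cdf (kap0 ph) b - cdf (kap0 ph) a" using cq a b by simp
        also have "\<dots> < e"
        proof -
          have A1: "\<bar>cdf (kap0 ph) a - cdf (kap0 ph) t\<bar> < e / 2" using d(2)[of a] a by simp
          have B1: "\<bar>cdf (kap0 ph) b - cdf (kap0 ph) t\<bar> < e / 2" using d(2)[of b] b by simp
          show ?thesis using A1 B1 unfolding abs_less_iff by linarith
        qed
        finally show "measure (k ph) {t} \<le> 0 + e" by simp
      qed
      thus ?thesis by (simp add: antisym)
    qed
    show "continuous_on UNIV (\<lambda>th. cdf (k ph) th)"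
      by (rule continuous_at_imp_continuous_on) (simp add: Kd.isCont_cdf z)
  qed
qed

end

theorem mainTheorem8:
  fixes PX :: "real measure" and K :: "real \<Rightarrow> real measure"
  assumes PX: "prob_space PX" "sets PX = sets borel"
    and K: "K \<in> borel \<rightarrow>\<^sub>M prob_algebra borel"
    and finiteMI: "mutual_info (joint_dist PX K) < \<infinity>"
  shows "(distr (norm_joint PX K) borel snd = unif01)
    \<and> (mutual_info (norm_joint PX K) = mutual_info (joint_dist PX K))
    \<and> (absolutely_continuous (lborel \<Otimes>\<^sub>M lborel) (norm_joint PX K)
         \<and> emeasure (norm_joint PX K) ({0<..<1} \<times> {0<..<1}) = 1)
    \<and> ((\<exists>\<kappa>. \<kappa> \<in> borel \<rightarrow>\<^sub>M prob_algebra borel \<and>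
            norm_joint PX K = distr (norm_joint PX K) borel snd \<bind>
              (\<lambda>ph. \<kappa> ph \<bind> (\<lambda>th. return (borel \<Otimes>\<^sub>M borel) (th, ph))))
         \<and> (\<forall>\<kappa>. \<kappa> \<in> borel \<rightarrow>\<^sub>M prob_algebra borel \<and>
            norm_joint PX K = distr (norm_joint PX K) borel snd \<bind>
              (\<lambda>ph. \<kappa> ph \<bind> (\<lambda>th. return (borel \<Otimes>\<^sub>M borel) (th, ph)))
            \<longrightarrow> (AE ph in distr (norm_joint PX K) borel snd.
                   continuous_on UNIV (\<lambda>th. cdf (\<kappa> ph) th))))"
proof -
  interpret chanMI PX K
    by (intro chanMI.intro chan.intro chanMI_axioms.intro PX K finiteMI)
  have i: "distr NJ borel snd = unif01" by (rule distr_NJ_snd)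
  show ?thesis
  proof (intro conjI)
    show "distr NJ borel snd = unif01" by (rule i)
    show "mutual_info NJ = mutual_info J" by (rule MI_eq)
    show "absolutely_continuous (lborel \<Otimes>\<^sub>M lborel) NJ" by (rule ac_lborel)
    show "emeasure NJ ({0<..<1} \<times> {0<..<1}) = 1" by (rule NJ_box)
    show "\<exists>\<kappa>. \<kappa> \<in> borel \<rightarrow>\<^sub>M prob_algebra borel \<and>
            NJ = distr NJ borel snd \<bind> (\<lambda>ph. \<kappa> ph \<bind> (\<lambda>th. return (borel \<Otimes>\<^sub>M borel) (th, ph)))"
      unfolding i using kap0_meas kap0_rep by blast
    show "\<forall>\<kappa>. \<kappa> \<in> borel \<rightarrow>\<^sub>M prob_algebra borel \<and>
            NJ = distr NJ borel snd \<bind> (\<lambda>ph. \<kappa> ph \<bind> (\<lambda>th. return (borel \<Otimes>\<^sub>M borel) (th, ph)))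
            \<longrightarrow> (AE ph in distr NJ borel snd. continuous_on UNIV (\<lambda>th. cdf (\<kappa> ph) th))"
      unfolding i using kap_cont by blast
  qed
qed

end
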